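(* Let $m,n\ge 1$ and let $P=\mathbb{R}^{m\times n}$ be the space of real $m\times n$ arrays $z=(z_{ij})$, with the group $\Gamma=\mathbf{S}_m\times\mathbf{S}_n$ acting by $((\sigma,\tau)z)_{ij}=z_{\sigma^{-1}(i)\,\tau^{-1}(j)}$. Then a linear map $L:P\to P$ commutes with the action of $\Gamma$ (i.e. $L(\gamma z)=\gamma L(z)$ for all $\gamma\in\Gamma$, $z\in P$) if and only if $L$ is a linear admissible map for the influence network $\mathcal{N}_{mn}$, i.e. if and only if there exist real constants $\alpha,\beta,\gamma,\delta$ such that for all $i,j$ $$L(z)_{ij}=\alpha z_{ij}+\beta\sum_{l\ne j}z_{il}+\gamma\sum_{k\ne i}z_{kj}+\delta\sum_{k\ne i,\,l\ne j}z_{kl}.$$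
   Context: The influence network $\mathcal{N}_{mn}$ has node set $\{(i,j):1\le i\le m,\ 1\le j\le n\}$, all nodes of one type, and three arrow types into each node $(i,j)$: row arrows from the nodes in $A_{ij}=\{(i,l):l\ne j\}$, column arrows from $O_{ij}=\{(k,j):k\ne i\}$, and diagonal arrows from $E_{ij}=\{(k,l):k\ne i,\ l\ne j\}$. A map $G:P\to P$ is admissible for $\mathcal{N}_{mn}$ if there is a single function $g$, independent of $(i,j)$, with $G_{ij}(z)=g(z_{ij},z_{A_{ij}},z_{O_{ij}},z_{E_{ij}})$, where $g$ is invariant under all permutations of the arguments within each of the three groups $z_{A_{ij}}$, $z_{O_{ij}}$, $z_{E_{ij}}$. Linear admissible maps are exactly those of the displayed form. *)

theory Defs
  imports "HOL-Analysis.Analysis" "HOL-Combinatorics.Permutations"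
begin

text \<open>Arrays z in R^{m x n} are modelled as real^'n^'m (row index in 'm, column index in 'n).
  The action of (sigma, tau) in S_m x S_n: ((sigma,tau) z)_{ij} = z_{sigma^-1(i), tau^-1(j)}.\<close>

definition gamma_act :: "('m::finite \<Rightarrow> 'm) \<Rightarrow> ('n::finite \<Rightarrow> 'n) \<Rightarrow> real^'n^'m \<Rightarrow> real^'n^'m" where
  "gamma_act \<sigma> \<tau> z = (\<chi> i j. z $ (inv \<sigma> i) $ (inv \<tau> j))"

end

theory Submission
  imports Defs
begin


definition E :: "'m::finite \<Rightarrow> 'n::finite \<Rightarrow> real^'n^'m" where
  "E k l = (\<chi> a b. if a = k \<and> b = l then 1 else 0)"

lemma decomp: "z = (\<Sum>k\<in>UNIV. \<Sum>l\<in>UNIV. (z$k$l) *\<^sub>R E k l)"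
proof -
  have "z $ a $ b = (\<Sum>k\<in>UNIV. \<Sum>l\<in>UNIV. z$k$l * (if a = k \<and> b = l then 1 else 0))" for a b
  proof -
    have *: "(\<Sum>l\<in>UNIV. z$k$l * (if a = k \<and> b = l then 1 else 0)) = (if a = k then z$k$b else 0)" for k
    proof -
      have "(\<Sum>l\<in>UNIV. z$k$l * (if a = k \<and> b = l then 1 else 0)) = (\<Sum>l\<in>UNIV. if l = b then (if a = k then z$k$b else 0) else 0)"
        by (intro sum.cong) auto
      then show ?thesis by simp
    qed
    have "(\<Sum>k\<in>UNIV. \<Sum>l\<in>UNIV. z$k$l * (if a = k \<and> b = l then 1 else 0)) = (\<Sum>k\<in>UNIV. if a = k then z$k$b else 0)"
      by (simp only: *)
    also have "\<dots> = z $ a $ b" by simp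
    finally show ?thesis by simp
  qed
  note h = this
  have **: "(\<Sum>k\<in>UNIV. \<Sum>l\<in>UNIV. (z$k$l) *\<^sub>R E k l) $ a $ b = (\<Sum>k\<in>UNIV. \<Sum>l\<in>UNIV. z$k$l * (if a = k \<and> b = l then 1 else 0))" for a b
    by (simp add: E_def)
  show ?thesis
    unfolding vec_eq_iff by (intro allI) (subst **, rule h)
qed

lemma Lexp: assumes "linear L"
  shows "L z $ i $ j = (\<Sum>k\<in>UNIV. \<Sum>l\<in>UNIV. z$k$l * (L (E k l) $ i $ j))"
proof -
  have "L z = L (\<Sum>k\<in>UNIV. \<Sum>l\<in>UNIV. (z$k$l) *\<^sub>R E k l)" by (rule arg_cong[where f=L, OF decomp])
  also have "\<dots> = (\<Sum>k\<in>UNIV. \<Sum>l\<in>UNIV. (z$k$l) *\<^sub>R L (E k l))"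
    using assms by (simp add: linear_sum linear_scale o_def)
  finally show ?thesis by simp
qed

lemma reidx: assumes "p permutes (UNIV::'a set)"
  shows "(\<Sum>l\<in>UNIV-{j}. f (p l)) = (\<Sum>l\<in>UNIV-{p j}. (f l::real))"
proof -
  have "bij_betw p (UNIV-{j}) (UNIV-{p j})"
    using assms by (metis bij_betw_DiffI bij_betw_singletonI permutes_bij subset_UNIV)
  then show ?thesis by (rule sum.reindex_bij_betw)
qed

lemma perm2: fixes i k i' k' :: "'a"
  assumes "(i = k) = (i' = k')"
  shows "\<exists>\<sigma>. \<sigma> permutes (UNIV::'a set) \<and> \<sigma> i = i' \<and> \<sigma> k = k'"
proof -
  let ?r1 = "Transposition.transpose i i'"
  let ?k1 = "?r1 k"
  let ?s = "Transposition.transpose ?k1 k' \<circ> ?r1"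
  have "?s permutes UNIV" by (intro permutes_compose permutes_swap_id) auto
  moreover have "?s i = i'" "?s k = k'" using assms
    by (auto simp: Transposition.transpose_def)
  ultimately show ?thesis by blast
qed

lemma gE: assumes "\<sigma> permutes (UNIV::'m::finite set)" "\<tau> permutes (UNIV::'n::finite set)"
  shows "gamma_act \<sigma> \<tau> (E k l) = E (\<sigma> k) (\<tau> l)"
  using assms unfolding gamma_act_def E_def
  by (auto simp: vec_eq_iff permutes_inverses)

theorem theorem4p2:
  fixes L :: "real^'n::finite^'m::finite \<Rightarrow> real^'n^'m"
  assumes "linear L"
  shows "(\<forall>\<sigma> \<tau> z. \<sigma> permutes (UNIV :: 'm set) \<and> \<tau> permutes (UNIV :: 'n set) \<longrightarrow>
            L (gamma_act \<sigma> \<tau> z) = gamma_act \<sigma> \<tau> (L z))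
     \<longleftrightarrow> (\<exists>\<alpha> \<beta> \<gamma> \<delta> :: real. \<forall>z i j.
            L z $ i $ j = \<alpha> * z $ i $ j
              + \<beta> * (\<Sum>l\<in>UNIV - {j}. z $ i $ l)
              + \<gamma> * (\<Sum>k\<in>UNIV - {i}. z $ k $ j)
              + \<delta> * (\<Sum>k\<in>UNIV - {i}. \<Sum>l\<in>UNIV - {j}. z $ k $ l))"
proof
  assume H: "\<forall>\<sigma> \<tau> z. \<sigma> permutes (UNIV :: 'm set) \<and> \<tau> permutes (UNIV :: 'n set) \<longrightarrow>
            L (gamma_act \<sigma> \<tau> z) = gamma_act \<sigma> \<tau> (L z)"
  define c where "c i j k l = L (E k l) $ i $ j" for i j k l
  have inv: "c (\<sigma> i) (\<tau> j) (\<sigma> k) (\<tau> l) = c i j k l"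
    if "\<sigma> permutes (UNIV :: 'm set)" "\<tau> permutes (UNIV :: 'n set)" for \<sigma> \<tau> i j k l
  proof -
    have "L (E (\<sigma> k) (\<tau> l)) = gamma_act \<sigma> \<tau> (L (E k l))"
      using H that gE[OF that] by metis
    then show ?thesis using that
      by (simp add: c_def gamma_act_def permutes_inverses)
  qed
  have cc: "c i j k l = c i' j' k' l'"
    if h: "(i = k) = (i' = k')" "(j = l) = (j' = l')" for i j k l i' j' k' l'
  proof -
    obtain \<sigma> where s: "\<sigma> permutes (UNIV :: 'm set)" "\<sigma> i = i'" "\<sigma> k = k'"
      using perm2[OF h(1)] by blast
    obtain \<tau> where t: "\<tau> permutes (UNIV :: 'n set)" "\<tau> j = j'" "\<tau> l = l'"
      using perm2[OF h(2)] by blast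
    show ?thesis using inv[OF s(1) t(1), of i j k l] s t by simp
  qed
  define x0 :: 'm where "x0 = undefined"
  define y0 :: 'n where "y0 = undefined"
  define x1 where "x1 = (SOME x. x \<noteq> x0)"
  define y1 where "y1 = (SOME y. y \<noteq> y0)"
  define a where "a = c x0 y0 x0 y0"
  define b where "b = c x0 y0 x0 y1"
  define g where "g = c x0 y0 x1 y0"
  define d where "d = c x0 y0 x1 y1"
  have cij: "c i j i j = a" for i j unfolding a_def by (rule cc) auto
  have cil: "j \<noteq> l \<Longrightarrow> c i j i l = b" for i j l
  proof -
    assume "j \<noteq> l"
    then have "\<exists>y. y \<noteq> y0" by metis
    then have "y1 \<noteq> y0" unfolding y1_def by (rule someI_ex)
    then show ?thesis using \<open>j \<noteq> l\<close> unfolding b_def by (intro cc) auto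
  qed
  have ckj: "i \<noteq> k \<Longrightarrow> c i j k j = g" for i j k
  proof -
    assume "i \<noteq> k"
    then have "\<exists>y. y \<noteq> x0" by metis
    then have "x1 \<noteq> x0" unfolding x1_def by (rule someI_ex)
    then show ?thesis using \<open>i \<noteq> k\<close> unfolding g_def by (intro cc) auto
  qed
  have ckl: "i \<noteq> k \<Longrightarrow> j \<noteq> l \<Longrightarrow> c i j k l = d" for i j k l
  proof -
    assume a: "i \<noteq> k" "j \<noteq> l"
    then have "\<exists>y. y \<noteq> x0" by metis
    then have "x1 \<noteq> x0" unfolding x1_def by (rule someI_ex)
    have "\<exists>y. y \<noteq> y0" using a by metis
    then have "y1 \<noteq> y0" unfolding y1_def by (rule someI_ex)
    then show ?thesis using a \<open>x1 \<noteq> x0\<close> unfolding d_def by (intro cc) auto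
  qed
  show "\<exists>\<alpha> \<beta> \<gamma> \<delta> :: real. \<forall>z i j.
            L z $ i $ j = \<alpha> * z $ i $ j
              + \<beta> * (\<Sum>l\<in>UNIV - {j}. z $ i $ l)
              + \<gamma> * (\<Sum>k\<in>UNIV - {i}. z $ k $ j)
              + \<delta> * (\<Sum>k\<in>UNIV - {i}. \<Sum>l\<in>UNIV - {j}. z $ k $ l)"
  proof (intro exI allI)
    fix z :: "real^'n^'m" and i j
    let ?a = a and ?b = b and ?g = g and ?d = d
    have row: "(\<Sum>l\<in>UNIV. z$k$l * c i j k l) = z$k$j * c i j k j + (\<Sum>l\<in>UNIV-{j}. z$k$l * c i j k l)" for k
      by (simp add: sum.remove[of UNIV j])
    have "L z $ i $ j = (\<Sum>k\<in>UNIV. \<Sum>l\<in>UNIV. z$k$l * c i j k l)"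
      unfolding c_def by (rule Lexp[OF assms])
    also have "\<dots> = (\<Sum>l\<in>UNIV. z$i$l * c i j i l) + (\<Sum>k\<in>UNIV-{i}. \<Sum>l\<in>UNIV. z$k$l * c i j k l)"
      by (simp add: sum.remove[of UNIV i])
    also have "(\<Sum>l\<in>UNIV. z$i$l * c i j i l) = ?a * z$i$j + ?b * (\<Sum>l\<in>UNIV-{j}. z$i$l)"
    proof -
      have "(\<Sum>l\<in>UNIV-{j}. z$i$l * c i j i l) = (\<Sum>l\<in>UNIV-{j}. z$i$l * ?b)"
        by (intro sum.cong refl) (simp add: cil)
      then show ?thesis unfolding row by (simp add: cij sum_distrib_right[symmetric])
    qed
    also have "(\<Sum>k\<in>UNIV-{i}. \<Sum>l\<in>UNIV. z$k$l * c i j k l)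
        = (\<Sum>k\<in>UNIV-{i}. ?g * z$k$j + ?d * (\<Sum>l\<in>UNIV-{j}. z$k$l))"
    proof (intro sum.cong refl)
      fix k assume "k \<in> UNIV - {i}"
      then have ki: "i \<noteq> k" by auto
      have "(\<Sum>l\<in>UNIV-{j}. z$k$l * c i j k l) = (\<Sum>l\<in>UNIV-{j}. z$k$l * ?d)"
        by (intro sum.cong refl) (simp add: ckl ki)
      then show "(\<Sum>l\<in>UNIV. z$k$l * c i j k l) = ?g * z$k$j + ?d * (\<Sum>l\<in>UNIV-{j}. z$k$l)"
        unfolding row by (simp add: ckj ki sum_distrib_right[symmetric])
    qed
    also have "\<dots> = ?g * (\<Sum>k\<in>UNIV-{i}. z$k$j) + ?d * (\<Sum>k\<in>UNIV-{i}. \<Sum>l\<in>UNIV-{j}. z$k$l)"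
      by (simp add: sum.distrib sum_distrib_left)
    finally show "L z $ i $ j = ?a * z $ i $ j
              + ?b * (\<Sum>l\<in>UNIV - {j}. z $ i $ l)
              + ?g * (\<Sum>k\<in>UNIV - {i}. z $ k $ j)
              + ?d * (\<Sum>k\<in>UNIV - {i}. \<Sum>l\<in>UNIV - {j}. z $ k $ l)" by simp
  qed
next
  assume "\<exists>\<alpha> \<beta> \<gamma> \<delta> :: real. \<forall>z i j.
            L z $ i $ j = \<alpha> * z $ i $ j
              + \<beta> * (\<Sum>l\<in>UNIV - {j}. z $ i $ l)
              + \<gamma> * (\<Sum>k\<in>UNIV - {i}. z $ k $ j)
              + \<delta> * (\<Sum>k\<in>UNIV - {i}. \<Sum>l\<in>UNIV - {j}. z $ k $ l)"
  then obtain \<alpha> \<beta> \<gamma> \<delta> :: real where F: "\<And>z i j.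
            L z $ i $ j = \<alpha> * z $ i $ j
              + \<beta> * (\<Sum>l\<in>UNIV - {j}. z $ i $ l)
              + \<gamma> * (\<Sum>k\<in>UNIV - {i}. z $ k $ j)
              + \<delta> * (\<Sum>k\<in>UNIV - {i}. \<Sum>l\<in>UNIV - {j}. z $ k $ l)" by blast
  show "\<forall>\<sigma> \<tau> z. \<sigma> permutes (UNIV :: 'm set) \<and> \<tau> permutes (UNIV :: 'n set) \<longrightarrow>
            L (gamma_act \<sigma> \<tau> z) = gamma_act \<sigma> \<tau> (L z)"
  proof (intro allI impI, elim conjE)
    fix \<sigma> :: "'m \<Rightarrow> 'm" and \<tau> :: "'n \<Rightarrow> 'n" and z :: "real^'n^'m"
    assume s: "\<sigma> permutes UNIV" and t: "\<tau> permutes UNIV"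
    have si: "inv \<sigma> permutes UNIV" using s by (rule permutes_inv)
    have ti: "inv \<tau> permutes UNIV" using t by (rule permutes_inv)
    show "L (gamma_act \<sigma> \<tau> z) = gamma_act \<sigma> \<tau> (L z)"
    proof -
      have "L (gamma_act \<sigma> \<tau> z) $ i $ j = L z $ inv \<sigma> i $ inv \<tau> j" for i j
      proof -
        have g: "gamma_act \<sigma> \<tau> z $ k $ l = z $ inv \<sigma> k $ inv \<tau> l" for k l
          by (simp add: gamma_act_def)
        have r1: "(\<Sum>l\<in>UNIV-{j}. z $ inv \<sigma> k $ inv \<tau> l) = (\<Sum>l\<in>UNIV-{inv \<tau> j}. z $ inv \<sigma> k $ l)" for k
          by (rule reidx[OF ti, of "\<lambda>l. z $ inv \<sigma> k $ l" j])
        have r2: "(\<Sum>k\<in>UNIV-{i}. z $ inv \<sigma> k $ inv \<tau> j) = (\<Sum>k\<in>UNIV-{inv \<sigma> i}. z $ k $ inv \<tau> j)"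
          by (rule reidx[OF si, of "\<lambda>k. z $ k $ inv \<tau> j" i])
        have r3: "(\<Sum>k\<in>UNIV-{i}. \<Sum>l\<in>UNIV-{inv \<tau> j}. z $ inv \<sigma> k $ l) = (\<Sum>k\<in>UNIV-{inv \<sigma> i}. \<Sum>l\<in>UNIV-{inv \<tau> j}. z $ k $ l)"
          by (rule reidx[OF si, of "\<lambda>k. \<Sum>l\<in>UNIV-{inv \<tau> j}. z $ k $ l" i])
        show ?thesis unfolding F[of "gamma_act \<sigma> \<tau> z"] F[of z] g r1 r2 r3 ..
      qed
      then show ?thesis by (simp add: vec_eq_iff gamma_act_def)
    qed
  qed
qed

end
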